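(* For every integer $n \geq 63$, $$\mathrm{ex}(n, C_{13}) \leq \frac{3(n-3)}{2}.$$
   Context: A linear $3$-graph $G=(V,E)$ consists of a finite vertex set $V$ and a collection $E$ of $3$-element subsets of $V$ (edges) such that any two distinct edges share at most one vertex. The crown $C_{13}$ is the linear $3$-graph on $9$ vertices $\{a,b,c,d,e,f,g,h,i\}$ with edges $\{a,b,c\},\{a,d,e\},\{b,f,g\},\{c,h,i\}$. A linear $3$-graph is $C_{13}$-free if it contains no copy of $C_{13}$. The linear Turán number $\mathrm{ex}(n, C_{13})$ is the maximum number of edges in a $C_{13}$-free linear $3$-graph on $n$ vertices. *)

theory Defs
  imports Complex_Main
begin

definition linear_3graph :: "'a set \<Rightarrow> 'a set set \<Rightarrow> bool" where
  "linear_3graph V E \<longleftrightarrow> finite V \<and> (\<forall>e\<in>E. e \<subseteq> V \<and> card e = 3) \<and>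
     (\<forall>e1\<in>E. \<forall>e2\<in>E. e1 \<noteq> e2 \<longrightarrow> card (e1 \<inter> e2) \<le> 1)"

definition contains_crown :: "'a set set \<Rightarrow> bool" where
  "contains_crown E \<longleftrightarrow> (\<exists>a b c d e f g h i.
      distinct [a, b, c, d, e, f, g, h, i] \<and>
      {a, b, c} \<in> E \<and> {a, d, e} \<in> E \<and> {b, f, g} \<in> E \<and> {c, h, i} \<in> E)"

text \<open>Linear Turan number ex(n, C13); vertex set taken to be {0..<n} (WLOG up to isomorphism).\<close>
definition ex_C13 :: "nat \<Rightarrow> nat" where
  "ex_C13 n = Max {card E | E :: nat set set.
      linear_3graph {..<n} E \<and> \<not> contains_crown E}"

end

theory Submission
  imports Defs
begin

definition ctf :: "nat \<Rightarrow> real" where "ctf n = (if n \<le> 5 then 1 / real n else 0)"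

lemma classify:
  fixes x y z :: nat
  assumes "x \<ge> 1" "y \<ge> 1" "z \<ge> 1"
    and n1: "\<not>(x \<ge> 2 \<and> y \<ge> 4 \<and> z \<ge> 6)" and n2: "\<not>(x \<ge> 2 \<and> z \<ge> 4 \<and> y \<ge> 6)"
    and n3: "\<not>(y \<ge> 2 \<and> x \<ge> 4 \<and> z \<ge> 6)" and n4: "\<not>(y \<ge> 2 \<and> z \<ge> 4 \<and> x \<ge> 6)"
    and n5: "\<not>(z \<ge> 2 \<and> x \<ge> 4 \<and> y \<ge> 6)" and n6: "\<not>(z \<ge> 2 \<and> y \<ge> 4 \<and> x \<ge> 6)"
  shows "ctf x + ctf y + ctf z \<ge> 2/3 + 1/30 \<or>
    (ctf x + ctf y + ctf z < 2/3 \<and> ctf x + ctf y + ctf z \<ge> 2/3 - 1/15 \<and>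
      ((x \<ge> 4 \<and> y = 5 \<and> z = 5) \<or> (y \<ge> 4 \<and> x = 5 \<and> z = 5) \<or> (z \<ge> 4 \<and> x = 5 \<and> y = 5))) \<or>
    (ctf x + ctf y + ctf z = 2/3 \<and>
      ((x = 3 \<and> y = 3 \<and> z \<ge> 6) \<or> (x = 3 \<and> z = 3 \<and> y \<ge> 6) \<or> (y = 3 \<and> z = 3 \<and> x \<ge> 6)))"
proof -
  have hx: "x = 1 \<or> x = 2 \<or> x = 3 \<or> x = 4 \<or> x = 5 \<or> x \<ge> 6" using assms(1) by arith
  have hy: "y = 1 \<or> y = 2 \<or> y = 3 \<or> y = 4 \<or> y = 5 \<or> y \<ge> 6" using assms(2) by arith
  have hz: "z = 1 \<or> z = 2 \<or> z = 3 \<or> z = 4 \<or> z = 5 \<or> z \<ge> 6" using assms(3) by arith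
  have c6: "n \<ge> 6 \<Longrightarrow> ctf n = 0" for n by (simp add: ctf_def)
  show ?thesis
    using hx hy hz n1 n2 n3 n4 n5 n6
    by (elim disjE) (auto simp: ctf_def c6)
qed

locale cf =
  fixes V :: "'a set" and E :: "'a set set"
  assumes finV: "finite V"
    and subV: "g \<in> E \<Longrightarrow> g \<subseteq> V"
    and c3: "g \<in> E \<Longrightarrow> card g = 3"
    and lin: "g1 \<in> E \<Longrightarrow> g2 \<in> E \<Longrightarrow> g1 \<noteq> g2 \<Longrightarrow> card (g1 \<inter> g2) \<le> 1"
    and nc: "\<not> contains_crown E"
begin

definition dg :: "'a \<Rightarrow> nat" where "dg v = card {g\<in>E. v \<in> g}"

lemma finE: "finite E"
proof -
  have "E \<subseteq> Pow V" using subV by auto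
  then show ?thesis using finV by (meson finite_Pow_iff rev_finite_subset)
qed

lemma finEv: "finite {g\<in>E. P g}" using finE by simp

lemma finite_edge: "g \<in> E \<Longrightarrow> finite g"
  using c3 card.infinite by fastforce

lemma share:
  assumes "g1 \<in> E" "g2 \<in> E" "u \<in> g1" "u \<in> g2" "v \<in> g1" "v \<in> g2" "u \<noteq> v"
  shows "g1 = g2"
proof (rule ccontr)
  assume "g1 \<noteq> g2"
  then have "card (g1 \<inter> g2) \<le> 1" using lin assms by blast
  moreover have "{u,v} \<subseteq> g1 \<inter> g2" using assms by auto
  moreover have "finite (g1 \<inter> g2)" using finite_edge[OF assms(1)] by simp
  ultimately have "card {u,v} \<le> 1" by (meson card_mono order_trans)
  with assms(7) show False by simp
qed

lemma share2:
  assumes "g1 \<in> E" "g2 \<in> E" "g1 \<noteq> g2" "u \<in> g1" "u \<in> g2" "v \<in> g1" "v \<in> g2"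
  shows "u = v"
  using share assms by blast

lemma edge_eq:
  assumes "g \<in> E" "u \<in> g" "v \<in> g" "w \<in> g" "u \<noteq> v" "u \<noteq> w" "v \<noteq> w"
  shows "g = {u,v,w}"
proof -
  have "{u,v,w} \<subseteq> g" using assms by auto
  moreover have "card {u,v,w} = 3" using assms by simp
  ultimately show ?thesis using c3[OF assms(1)] finite_edge[OF assms(1)] by (metis card_subset_eq)
qed

lemma edge_obtain:
  assumes "g \<in> E" "v \<in> g"
  obtains x y where "g = {v,x,y}" "x \<noteq> v" "y \<noteq> v" "x \<noteq> y"
proof -
  have "card (g - {v}) = 2" using c3[OF assms(1)] assms(2) finite_edge[OF assms(1)] by simp
  then obtain x y where xy: "g - {v} = {x,y}" "x \<noteq> y" by (meson card_2_iff)
  then have "g = {v,x,y}" "x \<noteq> v" "y \<noteq> v" using assms(2) by auto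
  then show ?thesis using that xy(2) by blast
qed

lemma edge_distinct:
  assumes "{a,b,c} \<in> E" shows "a \<noteq> b" "a \<noteq> c" "b \<noteq> c"
proof -
  have "card {a,b,c} = 3" using c3 assms by blast
  then show "a \<noteq> b" "a \<noteq> c" "b \<noteq> c" by (auto simp: card_insert_if split: if_splits)
qed

lemma crownI:
  assumes "{a,b,c} \<in> E" "{a,d,e} \<in> E" "{b,f,g} \<in> E" "{c,h,i} \<in> E"
    "distinct [a,b,c,d,e,f,g,h,i]"
  shows False
  using nc assms unfolding contains_crown_def by blast

lemma one_through:
  assumes "b \<noteq> x" shows "card {g\<in>E. b\<in>g \<and> x\<in>g} \<le> 1"
proof -
  have "\<forall>g\<in>{g\<in>E. b\<in>g \<and> x\<in>g}. \<forall>h\<in>{g\<in>E. b\<in>g \<and> x\<in>g}. g = h"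
    using share assms by blast
  then show ?thesis using finEv card_le_Suc0_iff_eq[of "{g\<in>E. b\<in>g \<and> x\<in>g}"] by auto
qed

lemma avoid:
  assumes "finite X" "b \<notin> X" "finite F" "dg b > card F + card X"
  shows "\<exists>g\<in>E. b \<in> g \<and> g \<notin> F \<and> X \<inter> g = {}"
proof (rule ccontr)
  assume H: "\<not> ?thesis"
  have "{g\<in>E. b\<in>g} \<subseteq> F \<union> (\<Union>x\<in>X. {g\<in>E. b\<in>g \<and> x\<in>g})" using H by blast
  then have "dg b \<le> card (F \<union> (\<Union>x\<in>X. {g\<in>E. b\<in>g \<and> x\<in>g}))"
    unfolding dg_def by (intro card_mono) (auto simp: assms finEv)
  also have "\<dots> \<le> card F + card (\<Union>x\<in>X. {g\<in>E. b\<in>g \<and> x\<in>g})" by (rule card_Un_le)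
  also have "card (\<Union>x\<in>X. {g\<in>E. b\<in>g \<and> x\<in>g}) \<le> (\<Sum>x\<in>X. card {g\<in>E. b\<in>g \<and> x\<in>g})"
    by (rule card_UN_le[OF assms(1)])
  also have "\<dots> \<le> (\<Sum>x\<in>X. 1)"
    apply (rule sum_mono) using one_through assms(2) by (metis (no_types, lifting))
  finally show False using assms(4) by simp
qed

lemma not_in_other:
  assumes "g \<in> E" "h \<in> E" "g \<noteq> h" "a \<in> g" "a \<in> h" "x \<in> g" "x \<noteq> a"
  shows "x \<notin> h"
  using share2[OF assms(1,2,3)] assms(4-7) by blast

lemma crown1:
  assumes e: "{a,b,c} \<in> E" and d: "dg a \<ge> 2" "dg b \<ge> 4" "dg c \<ge> 6"
  shows False
proof -
  note dist = edge_distinct[OF e]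
  obtain A where A: "A \<in> E" "a \<in> A" "A \<noteq> {a,b,c}"
    using avoid[of "{}" a "{{a,b,c}}"] d by auto
  obtain x y where Axy: "A = {a,x,y}" "x\<noteq>a" "y\<noteq>a" "x\<noteq>y" by (rule edge_obtain[OF A(1) A(2)])
  have "x \<notin> {a,b,c}" "y \<notin> {a,b,c}"
    using not_in_other[OF A(1) e A(3) A(2)] Axy by auto
  then have xy: "x \<noteq> b" "x \<noteq> c" "y \<noteq> b" "y \<noteq> c" by auto
  have "card {x,y} = 2" using Axy by simp
  then obtain B where B: "B \<in> E" "b \<in> B" "B \<notin> {{a,b,c}}" "{x,y} \<inter> B = {}"
    using avoid[of "{x,y}" b "{{a,b,c}}"] d xy by auto
  obtain u v where Buv: "B = {b,u,v}" "u\<noteq>b" "v\<noteq>b" "u\<noteq>v" by (rule edge_obtain[OF B(1) B(2)])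
  have "u \<notin> {a,b,c}" "v \<notin> {a,b,c}"
    using not_in_other[OF B(1) e _ B(2)] B Buv by auto
  then have uv: "u \<noteq> a" "u \<noteq> c" "v \<noteq> a" "v \<noteq> c" by auto
  have "card {x,y,u,v} \<le> 4" by (rule card_insert_le_m1) (auto simp: card_insert_if)
  then obtain C where C: "C \<in> E" "c \<in> C" "C \<notin> {{a,b,c}}" "{x,y,u,v} \<inter> C = {}"
    using avoid[of "{x,y,u,v}" c "{{a,b,c}}"] d xy uv by auto
  obtain h i where Chi: "C = {c,h,i}" "h\<noteq>c" "i\<noteq>c" "h\<noteq>i" by (rule edge_obtain[OF C(1) C(2)])
  have "h \<notin> {a,b,c}" "i \<notin> {a,b,c}"
    using not_in_other[OF C(1) e _ C(2)] C Chi by auto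
  then have hi: "h \<noteq> a" "h \<noteq> b" "i \<noteq> a" "i \<noteq> b" by auto
  have xyuv: "x \<noteq> u" "x \<noteq> v" "y \<noteq> u" "y \<noteq> v" using B(4) Buv by auto
  have hixyuv: "h \<noteq> x" "h \<noteq> y" "h \<noteq> u" "h \<noteq> v" "i \<noteq> x" "i \<noteq> y" "i \<noteq> u" "i \<noteq> v"
    using C(4) Chi by auto
  show False
    apply (rule crownI[of a b c x y u v h i])
    using e A(1) Axy(1) B(1) Buv(1) C(1) Chi(1) apply simp_all
    using  Axy(2-4) Buv(2-4) Chi(2-4) xy uv hi dist xyuv hixyuv by auto
qed


lemma edge_obtain2:
  assumes "g \<in> E" "u \<in> g" "v \<in> g" "u \<noteq> v"
  obtains w where "g = {u,v,w}" "w \<noteq> u" "w \<noteq> v"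
proof -
  obtain x y where xy: "g = {u,x,y}" "x \<noteq> u" "y \<noteq> u" "x \<noteq> y" by (rule edge_obtain[OF assms(1,2)])
  show ?thesis
  proof (cases "v = x")
    case True then show ?thesis using that[of y] xy by auto
  next
    case False then have "v = y" using assms(3,4) xy by auto
    then show ?thesis using that[of x] xy by auto
  qed
qed

lemma crown_core:
  assumes e: "{a,b,c} \<in> E" and A: "A \<in> E" "a \<in> A" "A \<noteq> {a,b,c}"
    and B: "B \<in> E" "b \<in> B" "B \<noteq> {a,b,c}" and C: "C \<in> E" "c \<in> C" "C \<noteq> {a,b,c}"
    and dAB: "A \<inter> B = {}" and dAC: "A \<inter> C = {}" and dBC: "B \<inter> C = {}"
  shows False
proof -
  note dist = edge_distinct[OF e]
  obtain x y where Axy: "A = {a,x,y}" "x\<noteq>a" "y\<noteq>a" "x\<noteq>y" by (rule edge_obtain[OF A(1) A(2)])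
  obtain u v where Buv: "B = {b,u,v}" "u\<noteq>b" "v\<noteq>b" "u\<noteq>v" by (rule edge_obtain[OF B(1) B(2)])
  obtain h i where Chi: "C = {c,h,i}" "h\<noteq>c" "i\<noteq>c" "h\<noteq>i" by (rule edge_obtain[OF C(1) C(2)])
  have "x \<notin> {a,b,c}" "y \<notin> {a,b,c}"
    using not_in_other[OF A(1) e A(3) A(2)] Axy by auto
  moreover have "u \<notin> {a,b,c}" "v \<notin> {a,b,c}"
    using not_in_other[OF B(1) e B(3) B(2)] Buv by auto
  moreover have "h \<notin> {a,b,c}" "i \<notin> {a,b,c}"
    using not_in_other[OF C(1) e C(3) C(2)] Chi by auto
  moreover have "x \<noteq> u" "x \<noteq> v" "y \<noteq> u" "y \<noteq> v" using dAB Axy Buv by auto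
  moreover have "x \<noteq> h" "x \<noteq> i" "y \<noteq> h" "y \<noteq> i" using dAC Axy Chi by auto
  moreover have "u \<noteq> h" "u \<noteq> i" "v \<noteq> h" "v \<noteq> i" using dBC Buv Chi by auto
  ultimately show False
    using crownI[of a b c x y u v h i] e A(1) B(1) C(1) Axy Buv Chi dist by auto
qed

lemma kill:
  assumes E1: "{b,p,q} \<in> E" "{c,p,r} \<in> E" "{b,r,s} \<in> E" "{c,q,s} \<in> E"
    and E2: "{b,d1,d3} \<in> E" "{b,d2,d4} \<in> E" "{c,d1,d4} \<in> E" "{c,d2,d3} \<in> E"
    and D1: "{a,p,s} \<in> E \<or> {a,q,r} \<in> E" and D2: "{a,d1,d2} \<in> E \<or> {a,d3,d4} \<in> E"
    and dist: "distinct [a,b,c,p,q,r,s,d1,d2,d3,d4]"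
    and X: "X \<in> E" "p \<in> X" "a \<notin> X" "b \<notin> X" "c \<notin> X"
  shows False
proof -
  obtain m n where Xmn: "X = {p,m,n}" "m \<noteq> p" "n \<noteq> p" "m \<noteq> n" by (rule edge_obtain[OF X(1) X(2)])
  have "X \<noteq> {b,p,q}" using X by auto
  then have qX: "q \<notin> X" using not_in_other[OF E1(1) X(1) _ _ X(2), of q] dist by auto
  have "X \<noteq> {c,p,r}" using X by auto
  then have rX: "r \<notin> X" using not_in_other[OF E1(2) X(1) _ _ X(2), of r] dist by auto
  show False
  proof (cases "s \<in> X")
    case True
    have "{a,p,s} \<notin> E"
    proof
      assume H: "{a,p,s} \<in> E"
      have "{a,p,s} = X" using share[OF H X(1), of p s] True X(2) dist by auto
      then show False using X(3) by auto
    qed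
    then have aqr: "{a,q,r} \<in> E" using D1 by auto
    obtain n' where Xn: "X = {p,s,n'}" "n' \<noteq> p" "n' \<noteq> s"
      by (rule edge_obtain2[OF X(1) X(2) True]) (use dist in auto)
    have n': "n' \<noteq> a" "n' \<noteq> b" "n' \<noteq> c" "n' \<noteq> q" "n' \<noteq> r" using X qX rX Xn by auto
    show False
    proof (cases "n' \<in> {d1,d3}")
      case False
      show False
        apply (rule crownI[of b p q d1 d3 s n' a r])
        using E1 E2 aqr Xn X(1) False n' dist by (auto simp: insert_commute)
    next
      case True
      then have "n' \<notin> {d2,d4}" using dist by auto
      then show False
        apply (rule_tac crownI[of b p q d2 d4 s n' a r])
        using E1 E2 aqr Xn X(1) n' dist by (auto simp: insert_commute)
    qed
  next
    case False
    have mn: "m \<noteq> a" "m \<noteq> b" "m \<noteq> c" "m \<noteq> q" "m \<noteq> r" "m \<noteq> s"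
      "n \<noteq> a" "n \<noteq> b" "n \<noteq> c" "n \<noteq> q" "n \<noteq> r" "n \<noteq> s"
      using X qX rX Xmn False by auto
    have c1: "X \<inter> {d1,d3} \<noteq> {}"
    proof
      assume H: "X \<inter> {d1,d3} = {}"
      show False
        apply (rule crownI[of b p q d1 d3 m n c s])
        using E1 E2 Xmn X(1) H mn dist by (auto simp: insert_commute)
    qed
    have c2: "X \<inter> {d2,d4} \<noteq> {}"
    proof
      assume H: "X \<inter> {d2,d4} = {}"
      show False
        apply (rule crownI[of b p q d2 d4 m n c s])
        using E1 E2 Xmn X(1) H mn dist by (auto simp: insert_commute)
    qed
    have c3: "X \<inter> {d1,d4} \<noteq> {}"
    proof
      assume H: "X \<inter> {d1,d4} = {}"
      show False
        apply (rule crownI[of c p r d1 d4 m n b s])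
        using E1 E2 Xmn X(1) H mn dist by (auto simp: insert_commute)
    qed
    have c4: "X \<inter> {d2,d3} \<noteq> {}"
    proof
      assume H: "X \<inter> {d2,d3} = {}"
      show False
        apply (rule crownI[of c p r d2 d3 m n b s])
        using E1 E2 Xmn X(1) H mn dist by (auto simp: insert_commute)
    qed
    have "(d1 \<in> X \<and> d2 \<in> X) \<or> (d3 \<in> X \<and> d4 \<in> X)"
      using c1 c2 c3 c4 Xmn dist by auto
    then show False
    proof
      assume H: "d1 \<in> X \<and> d2 \<in> X"
      then have X12: "X = {d1,p,d2}" using edge_eq[OF X(1), of d1 p d2] X(2) dist by auto
      have "{a,d1,d2} \<notin> E"
      proof
        assume H2: "{a,d1,d2} \<in> E"
        have "{a,d1,d2} = X" using share[OF H2 X(1), of d1 d2] H dist by auto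
        then show False using X(3) by auto
      qed
      then have a34: "{a,d3,d4} \<in> E" using D2 by auto
      show False
        apply (rule crownI[of b d1 d3 r s p d2 a d4])
        using E1 E2 a34 X12 X(1) dist by (auto simp: insert_commute)
    next
      assume H: "d3 \<in> X \<and> d4 \<in> X"
      then have X34: "X = {d4,p,d3}" using edge_eq[OF X(1), of d4 p d3] X(2) dist by auto
      have "{a,d3,d4} \<notin> E"
      proof
        assume H2: "{a,d3,d4} \<in> E"
        have "{a,d3,d4} = X" using share[OF H2 X(1), of d3 d4] H dist by auto
        then show False using X(3) by auto
      qed
      then have a12: "{a,d1,d2} \<in> E" using D2 by auto
      show False
        apply (rule crownI[of b d2 d4 r s a d1 p d3])
        using E1 E2 a12 X34 X(1) dist by (auto simp: insert_commute)
    qed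
  qed
qed

end

context cf begin

lemma S1:
  assumes e: "{a,b,c} \<in> E" and db: "dg b = 5" and dc: "dg c = 5"
    and A: "{a,x,y} \<in> E" "{a,x,y} \<noteq> {a,b,c}"
  obtains u1 v1 u2 v2 x1 y1 x2 y2 where
    "{b,u1,v1} \<in> E" "{b,u2,v2} \<in> E" "{b,x,x1} \<in> E" "{b,y,y1} \<in> E"
    "{c,u1,u2} \<in> E" "{c,v1,v2} \<in> E" "{c,x,x2} \<in> E" "{c,y,y2} \<in> E"
    "distinct [a,b,c,u1,v1,u2,v2,x,y]"
    "x1 \<notin> {a,b,c,u1,v1,u2,v2,x,y}" "y1 \<notin> {a,b,c,u1,v1,u2,v2,x,y}"
    "x2 \<notin> {a,b,c,u1,v1,u2,v2,x,y}" "y2 \<notin> {a,b,c,u1,v1,u2,v2,x,y}"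
    "x1 \<noteq> y1" "x2 \<noteq> y2" "x1 \<noteq> x2" "y1 \<noteq> y2"
    "{g\<in>E. b\<in>g} = {{a,b,c},{b,u1,v1},{b,u2,v2},{b,x,x1},{b,y,y1}}"
    "{g\<in>E. c\<in>g} = {{a,b,c},{c,u1,u2},{c,v1,v2},{c,x,x2},{c,y,y2}}"
proof -
  note dist = edge_distinct[OF e]
  note xyd = edge_distinct[OF A(1)]
  have xe: "x \<notin> {a,b,c}" "y \<notin> {a,b,c}"
    using not_in_other[OF A(1) e A(2), of a] xyd by auto
  define Bs where "Bs = {g\<in>E. b\<in>g} - {{a,b,c}}"
  define Cs where "Cs = {g\<in>E. c\<in>g} - {{a,b,c}}"
  have cBs: "card Bs = 4" unfolding Bs_def using db e finEv by (simp add: dg_def)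
  have cCs: "card Cs = 4" unfolding Cs_def using dc e finEv by (simp add: dg_def)
  have fBs: "finite Bs" "finite Cs" unfolding Bs_def Cs_def using finEv by auto
  define B0 where "B0 = {g\<in>Bs. x \<notin> g \<and> y \<notin> g}"
  define C0 where "C0 = {g\<in>Cs. x \<notin> g \<and> y \<notin> g}"
  have fB0: "finite B0" "finite C0" using fBs unfolding B0_def C0_def by auto
  have aB: "a \<notin> g" if "g \<in> Bs" for g
    using that not_in_other[OF _ e _ _ _ _ , of g b a] dist unfolding Bs_def by auto
  have cB: "c \<notin> g" if "g \<in> Bs" for g
    using that not_in_other[OF _ e _ _ _ _ , of g b c] dist unfolding Bs_def by auto
  have aC: "a \<notin> g" if "g \<in> Cs" for g
    using that not_in_other[OF _ e _ _ _ _ , of g c a] dist unfolding Cs_def by auto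
  have bC: "b \<notin> g" if "g \<in> Cs" for g
    using that not_in_other[OF _ e _ _ _ _ , of g c b] dist unfolding Cs_def by auto
  have bA: "b \<notin> {a,x,y}" "c \<notin> {a,x,y}" using xe dist by auto
  have covB: "Bs \<subseteq> B0 \<union> {g\<in>E. b\<in>g \<and> x\<in>g} \<union> {g\<in>E. b\<in>g \<and> y\<in>g}"
    unfolding B0_def Bs_def by auto
  have covC: "Cs \<subseteq> C0 \<union> {g\<in>E. c\<in>g \<and> x\<in>g} \<union> {g\<in>E. c\<in>g \<and> y\<in>g}"
    unfolding C0_def Cs_def by auto
  have bx1: "card {g\<in>E. b\<in>g \<and> x\<in>g} \<le> 1" "card {g\<in>E. b\<in>g \<and> y\<in>g} \<le> 1"
    "card {g\<in>E. c\<in>g \<and> x\<in>g} \<le> 1" "card {g\<in>E. c\<in>g \<and> y\<in>g} \<le> 1"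
    using one_through xe by auto
  have cardcov: "card S \<le> card S0 + 1 + 1"
    if "S \<subseteq> S0 \<union> S1 \<union> S2" "finite S0" "finite S1" "finite S2" "card S1 \<le> 1" "card S2 \<le> 1"
    for S S0 S1 S2 :: "'a set set"
  proof -
    have "card S \<le> card (S0 \<union> S1 \<union> S2)" using that by (intro card_mono) auto
    also have "\<dots> \<le> card S0 + card S1 + card S2" by (meson card_Un_le add_right_mono order_trans)
    finally show ?thesis using that by linarith
  qed
  have gB0: "card B0 \<ge> 2" using cardcov[OF covB fB0(1) finEv finEv bx1(1,2)] cBs by simp
  have gC0: "card C0 \<ge> 2" using cardcov[OF covC fB0(2) finEv finEv bx1(3,4)] cCs by simp
  have meet: "B \<inter> C \<noteq> {}" if "B \<in> B0" "C \<in> C0" for B C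
  proof
    assume H: "B \<inter> C = {}"
    have B: "B \<in> E" "b \<in> B" "B \<noteq> {a,b,c}" "x \<notin> B" "y \<notin> B" "a \<notin> B"
      using that(1) aB unfolding B0_def Bs_def by auto
    have C: "C \<in> E" "c \<in> C" "C \<noteq> {a,b,c}" "x \<notin> C" "y \<notin> C" "a \<notin> C"
      using that(2) aC unfolding C0_def Cs_def by auto
    show False
      by (rule crown_core[OF e A(1) _ A(2) B(1,2,3) C(1,2,3) _ _ H]) (use B C bA in auto)
  qed
  have upC: "card C0 \<le> 2"
  proof -
    obtain B where B: "B \<in> B0" using gB0 by fastforce
    have BB: "B \<in> E" "b \<in> B" "c \<notin> B" using B cB unfolding B0_def Bs_def by auto
    obtain u v where Buv: "B = {b,u,v}" "u\<noteq>b" "v\<noteq>b" "u\<noteq>v" by (rule edge_obtain[OF BB(1,2)])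
    have uv: "u \<noteq> c" "v \<noteq> c" using BB Buv by auto
    have "C0 \<subseteq> {g\<in>E. c\<in>g \<and> u\<in>g} \<union> {g\<in>E. c\<in>g \<and> v\<in>g}"
    proof
      fix C assume C: "C \<in> C0"
      have "B \<inter> C \<noteq> {}" using meet[OF B C] .
      moreover have "b \<notin> C" using C bC unfolding C0_def by auto
      moreover have "C \<in> E" "c \<in> C" using C unfolding C0_def Cs_def by auto
      ultimately show "C \<in> {g\<in>E. c\<in>g \<and> u\<in>g} \<union> {g\<in>E. c\<in>g \<and> v\<in>g}" using Buv by auto
    qed
    then have "card C0 \<le> card ({g\<in>E. c\<in>g \<and> u\<in>g} \<union> {g\<in>E. c\<in>g \<and> v\<in>g})"
      by (intro card_mono) (auto simp: finEv)
    also have "\<dots> \<le> card {g\<in>E. c\<in>g \<and> u\<in>g} + card {g\<in>E. c\<in>g \<and> v\<in>g}" by (rule card_Un_le)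
    also have "\<dots> \<le> 2" using one_through[of c u] one_through[of c v] uv by auto
    finally show ?thesis .
  qed
  have upB: "card B0 \<le> 2"
  proof -
    obtain C where C: "C \<in> C0" using gC0 by fastforce
    have CC: "C \<in> E" "c \<in> C" "b \<notin> C" using C bC unfolding C0_def Cs_def by auto
    obtain u v where Cuv: "C = {c,u,v}" "u\<noteq>c" "v\<noteq>c" "u\<noteq>v" by (rule edge_obtain[OF CC(1,2)])
    have uv: "u \<noteq> b" "v \<noteq> b" using CC Cuv by auto
    have "B0 \<subseteq> {g\<in>E. b\<in>g \<and> u\<in>g} \<union> {g\<in>E. b\<in>g \<and> v\<in>g}"
    proof
      fix B assume B: "B \<in> B0"
      have "B \<inter> C \<noteq> {}" using meet[OF B C] .
      moreover have "c \<notin> B" using B cB unfolding B0_def by auto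
      moreover have "B \<in> E" "b \<in> B" using B unfolding B0_def Bs_def by auto
      ultimately show "B \<in> {g\<in>E. b\<in>g \<and> u\<in>g} \<union> {g\<in>E. b\<in>g \<and> v\<in>g}" using Cuv by auto
    qed
    then have "card B0 \<le> card ({g\<in>E. b\<in>g \<and> u\<in>g} \<union> {g\<in>E. b\<in>g \<and> v\<in>g})"
      by (intro card_mono) (auto simp: finEv)
    also have "\<dots> \<le> card {g\<in>E. b\<in>g \<and> u\<in>g} + card {g\<in>E. b\<in>g \<and> v\<in>g}" by (rule card_Un_le)
    also have "\<dots> \<le> 2" using one_through[of b u] one_through[of b v] uv by auto
    finally show ?thesis .
  qed
  have cB0: "card B0 = 2" and cC0: "card C0 = 2" using gB0 gC0 upB upC by auto
  have cardcov2: "card S \<le> card S0 + 1"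
    if "S \<subseteq> S0 \<union> S1" "finite S0" "finite S1" "card S1 \<le> 1"
    for S S0 S1 :: "'a set set"
  proof -
    have "card S \<le> card (S0 \<union> S1)" using that by (intro card_mono) auto
    also have "\<dots> \<le> card S0 + card S1" by (rule card_Un_le)
    finally show ?thesis using that by linarith
  qed
  have "\<exists>g\<in>Bs. x \<in> g"
  proof (rule ccontr)
    assume "\<not> ?thesis"
    then have "Bs \<subseteq> B0 \<union> {g\<in>E. b\<in>g \<and> y\<in>g}" unfolding B0_def Bs_def by auto
    from cardcov2[OF this fB0(1) finEv bx1(2)] cBs cB0 show False by simp
  qed
  then obtain Bx where Bx: "Bx \<in> Bs" "x \<in> Bx" by blast
  have "\<exists>g\<in>Bs. y \<in> g"
  proof (rule ccontr)
    assume "\<not> ?thesis"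
    then have "Bs \<subseteq> B0 \<union> {g\<in>E. b\<in>g \<and> x\<in>g}" unfolding B0_def Bs_def by auto
    from cardcov2[OF this fB0(1) finEv bx1(1)] cBs cB0 show False by simp
  qed
  then obtain By where By: "By \<in> Bs" "y \<in> By" by blast
  have "\<exists>g\<in>Cs. x \<in> g"
  proof (rule ccontr)
    assume "\<not> ?thesis"
    then have "Cs \<subseteq> C0 \<union> {g\<in>E. c\<in>g \<and> y\<in>g}" unfolding C0_def Cs_def by auto
    from cardcov2[OF this fB0(2) finEv bx1(4)] cCs cC0 show False by simp
  qed
  then obtain Cx where Cx: "Cx \<in> Cs" "x \<in> Cx" by blast
  have "\<exists>g\<in>Cs. y \<in> g"
  proof (rule ccontr)
    assume "\<not> ?thesis"
    then have "Cs \<subseteq> C0 \<union> {g\<in>E. c\<in>g \<and> x\<in>g}" unfolding C0_def Cs_def by auto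
    from cardcov2[OF this fB0(2) finEv bx1(3)] cCs cC0 show False by simp
  qed
  then obtain Cy where Cy: "Cy \<in> Cs" "y \<in> Cy" by blast
  obtain B1 B2 where B12: "B0 = {B1,B2}" "B1 \<noteq> B2" using cB0 by (meson card_2_iff)
  obtain C1 C2 where C12: "C0 = {C1,C2}" "C1 \<noteq> C2" using cC0 by (meson card_2_iff)
  have B1: "B1 \<in> E" "b \<in> B1" "B1 \<noteq> {a,b,c}" "x \<notin> B1" "y \<notin> B1" "a \<notin> B1" "c \<notin> B1"
    using B12 aB cB unfolding B0_def Bs_def by auto
  have B2: "B2 \<in> E" "b \<in> B2" "B2 \<noteq> {a,b,c}" "x \<notin> B2" "y \<notin> B2" "a \<notin> B2" "c \<notin> B2"
    using B12 aB cB unfolding B0_def Bs_def by auto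
  have C1: "C1 \<in> E" "c \<in> C1" "C1 \<noteq> {a,b,c}" "x \<notin> C1" "y \<notin> C1" "a \<notin> C1" "b \<notin> C1"
    using C12 aC bC unfolding C0_def Cs_def by auto
  have C2: "C2 \<in> E" "c \<in> C2" "C2 \<noteq> {a,b,c}" "x \<notin> C2" "y \<notin> C2" "a \<notin> C2" "b \<notin> C2"
    using C12 aC bC unfolding C0_def Cs_def by auto
  have m11: "B1 \<inter> C1 \<noteq> {}" "B1 \<inter> C2 \<noteq> {}" "B2 \<inter> C1 \<noteq> {}" "B2 \<inter> C2 \<noteq> {}"
    using meet B12 C12 by auto
  obtain u1 where u1: "u1 \<in> B1" "u1 \<in> C1" using m11(1) by blast
  have u1d: "u1 \<noteq> b" using u1 C1 by auto
  obtain v1 where v1: "B1 = {b,u1,v1}" "v1 \<noteq> b" "v1 \<noteq> u1"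
    by (rule edge_obtain2[OF B1(1,2) u1(1)]) (use u1d in auto)
  have u1c: "c \<noteq> u1" using u1(1) B1(7) by auto
  have u1C2: "u1 \<notin> C2"
  proof
    assume H: "u1 \<in> C2"
    show False using share[OF C1(1) C2(1) C1(2) C2(2) u1(2) H u1c] C12(2) by auto
  qed
  have v1C2: "v1 \<in> C2" using m11(2) v1 u1C2 C2 by auto
  obtain u2 where u2: "u2 \<in> B2" "u2 \<in> C1" using m11(3) by blast
  have u2d: "u2 \<noteq> b" using u2 C1 by auto
  obtain v2 where v2: "B2 = {b,u2,v2}" "v2 \<noteq> b" "v2 \<noteq> u2"
    by (rule edge_obtain2[OF B2(1,2) u2(1)]) (use u2d in auto)
  have u2c: "c \<noteq> u2" using u2(1) B2(7) by auto
  have u2C2: "u2 \<notin> C2"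
  proof
    assume H: "u2 \<in> C2"
    show False using share[OF C1(1) C2(1) C1(2) C2(2) u2(2) H u2c] C12(2) by auto
  qed
  have v2C2: "v2 \<in> C2" using m11(4) v2 u2C2 C2 by auto
  have B1B2: "\<And>z. z \<in> B1 \<Longrightarrow> z \<in> B2 \<Longrightarrow> z = b" using share2[OF B1(1) B2(1) B12(2)] B1 B2 by blast
  have inB: "u1 \<in> B1" "v1 \<in> B1" "u2 \<in> B2" "v2 \<in> B2" using v1 v2 by auto
  have d12: "u1 \<noteq> u2" "u1 \<noteq> v2" "v1 \<noteq> u2" "v1 \<noteq> v2"
    using B1B2 inB u1d u2d v1(2) v2(2) by metis+
  have d13: "u1 \<noteq> a" "u1 \<noteq> c" "u1 \<noteq> x" "u1 \<noteq> y" "v1 \<noteq> a" "v1 \<noteq> c" "v1 \<noteq> x" "v1 \<noteq> y"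
    using inB B1 by metis+
  have d14: "u2 \<noteq> a" "u2 \<noteq> c" "u2 \<noteq> x" "u2 \<noteq> y" "v2 \<noteq> a" "v2 \<noteq> c" "v2 \<noteq> x" "v2 \<noteq> y"
    using inB B2 by metis+
  have wdist: "distinct [a,b,c,u1,v1,u2,v2,x,y]"
    using d12 d13 d14 u1d u2d v1(2,3) v2(2,3) dist xe xyd by auto
  have C1e: "C1 = {c,u1,u2}" using edge_eq[OF C1(1) C1(2) u1(2) u2(2)] wdist by auto
  have C2e: "C2 = {c,v1,v2}" using edge_eq[OF C2(1) C2(2) v1C2 v2C2] wdist by auto
  have BxE: "Bx \<in> E" "b \<in> Bx" "Bx \<noteq> {a,b,c}" using Bx unfolding Bs_def by auto
  have ByE: "By \<in> E" "b \<in> By" "By \<noteq> {a,b,c}" using By unfolding Bs_def by auto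
  have CxE: "Cx \<in> E" "c \<in> Cx" "Cx \<noteq> {a,b,c}" "b \<notin> Cx" using Cx bC unfolding Cs_def by auto
  have CyE: "Cy \<in> E" "c \<in> Cy" "Cy \<noteq> {a,b,c}" "b \<notin> Cy" using Cy bC unfolding Cs_def by auto
  obtain x1 where x1: "Bx = {b,x,x1}" "x1 \<noteq> b" "x1 \<noteq> x"
    by (rule edge_obtain2[OF BxE(1,2) Bx(2)]) (use xe in auto)
  obtain y1 where y1: "By = {b,y,y1}" "y1 \<noteq> b" "y1 \<noteq> y"
    by (rule edge_obtain2[OF ByE(1,2) By(2)]) (use xe in auto)
  obtain x2 where x2: "Cx = {c,x,x2}" "x2 \<noteq> c" "x2 \<noteq> x"
    by (rule edge_obtain2[OF CxE(1,2) Cx(2)]) (use xe in auto)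
  obtain y2 where y2: "Cy = {c,y,y2}" "y2 \<noteq> c" "y2 \<noteq> y"
    by (rule edge_obtain2[OF CyE(1,2) Cy(2)]) (use xe in auto)
  have x1e: "x1 \<notin> {a,b,c}" using not_in_other[OF BxE(1) e BxE(3) BxE(2) _ _ x1(2)] x1(1) by auto
  have y1e: "y1 \<notin> {a,b,c}" using not_in_other[OF ByE(1) e ByE(3) ByE(2) _ _ y1(2)] y1(1) by auto
  have x2e: "x2 \<notin> {a,b,c}" using not_in_other[OF CxE(1) e CxE(3) CxE(2) _ _ x2(2)] x2(1) by auto
  have y2e: "y2 \<notin> {a,b,c}" using not_in_other[OF CyE(1) e CyE(3) CyE(2) _ _ y2(2)] y2(1) by auto
  have notA: "G = {a,x,y}" if "G \<in> E" "x \<in> G" "y \<in> G" for G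
    using share[OF that(1) A(1) that(2) _ that(3) _ xyd(3)] by auto
  have x1y: "x1 \<noteq> y" using notA[OF BxE(1)] x1(1) bA by auto
  have y1x: "y1 \<noteq> x" using notA[OF ByE(1)] y1(1) bA by auto
  have x2y: "x2 \<noteq> y" using notA[OF CxE(1)] x2(1) bA by auto
  have y2x: "y2 \<noteq> x" using notA[OF CyE(1)] y2(1) bA by auto
  have BxB: "Bx \<noteq> B1" "Bx \<noteq> B2" using Bx(2) B1(4) B2(4) by auto
  have ByB: "By \<noteq> B1" "By \<noteq> B2" using By(2) B1(5) B2(5) by auto
  have CxC: "Cx \<noteq> C1" "Cx \<noteq> C2" using Cx(2) C1(4) C2(4) by auto
  have CyC: "Cy \<noteq> C1" "Cy \<noteq> C2" using Cy(2) C1(5) C2(5) by auto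
  have x1u: "x1 \<notin> {u1,v1,u2,v2}"
    using not_in_other[OF BxE(1) B1(1) BxB(1) BxE(2) B1(2) _ x1(2)]
      not_in_other[OF BxE(1) B2(1) BxB(2) BxE(2) B2(2) _ x1(2)] x1(1) inB by auto
  have y1u: "y1 \<notin> {u1,v1,u2,v2}"
    using not_in_other[OF ByE(1) B1(1) ByB(1) ByE(2) B1(2) _ y1(2)]
      not_in_other[OF ByE(1) B2(1) ByB(2) ByE(2) B2(2) _ y1(2)] y1(1) inB by auto
  have inC: "u1 \<in> C1" "u2 \<in> C1" "v1 \<in> C2" "v2 \<in> C2" using C1e C2e by auto
  have x2u: "x2 \<notin> {u1,v1,u2,v2}"
    using not_in_other[OF CxE(1) C1(1) CxC(1) CxE(2) C1(2) _ x2(2)]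
      not_in_other[OF CxE(1) C2(1) CxC(2) CxE(2) C2(2) _ x2(2)] x2(1) inC by auto
  have y2u: "y2 \<notin> {u1,v1,u2,v2}"
    using not_in_other[OF CyE(1) C1(1) CyC(1) CyE(2) C1(2) _ y2(2)]
      not_in_other[OF CyE(1) C2(1) CyC(2) CyE(2) C2(2) _ y2(2)] y2(1) inC by auto
  have BxBy: "Bx \<noteq> By" using x1(1) By(2) x1y xe xyd(3) by auto
  have CxCy: "Cx \<noteq> Cy" using x2(1) Cy(2) x2y xe xyd(3) by auto
  have x1y1: "x1 \<noteq> y1"
    using not_in_other[OF ByE(1) BxE(1) BxBy[symmetric] ByE(2) BxE(2) _ y1(2)] y1(1) x1(1) by auto
  have x2y2: "x2 \<noteq> y2"
    using not_in_other[OF CyE(1) CxE(1) CxCy[symmetric] CyE(2) CxE(2) _ y2(2)] y2(1) x2(1) by auto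
  have BxCx: "Bx \<noteq> Cx" using BxE(2) CxE(4) by auto
  have ByCy: "By \<noteq> Cy" using ByE(2) CyE(4) by auto
  have x1x2: "x1 \<noteq> x2"
  proof
    assume H: "x1 = x2"
    have "Bx = Cx" using share[OF BxE(1) CxE(1), of x x1] x1 x2 H by auto
    then show False using BxCx by simp
  qed
  have y1y2: "y1 \<noteq> y2"
  proof
    assume H: "y1 = y2"
    have "By = Cy" using share[OF ByE(1) CyE(1), of y y1] y1 y2 H by auto
    then show False using ByCy by simp
  qed
  have Eb: "{g\<in>E. b\<in>g} = {{a,b,c},B1,B2,Bx,By}"
  proof
    show "{g\<in>E. b\<in>g} \<subseteq> {{a,b,c},B1,B2,Bx,By}"
    proof
      fix g assume g: "g \<in> {g\<in>E. b\<in>g}"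
      show "g \<in> {{a,b,c},B1,B2,Bx,By}"
      proof (cases "g = {a,b,c}")
        case False
        then have gB: "g \<in> Bs" using g unfolding Bs_def by auto
        show ?thesis
        proof (cases "x \<in> g")
          case True
          then have "g = Bx" using share[OF _ BxE(1), of g b x] g Bx(2) BxE(2) xe by auto
          then show ?thesis by simp
        next
          case nx: False
          show ?thesis
          proof (cases "y \<in> g")
            case True
            then have "g = By" using share[OF _ ByE(1), of g b y] g By(2) ByE(2) xe by auto
            then show ?thesis by simp
          next
            case False
            then have "g \<in> B0" using gB nx unfolding B0_def by auto
            then show ?thesis using B12 by auto
          qed
        qed
      qed simp
    qed
    show "{{a,b,c},B1,B2,Bx,By} \<subseteq> {g\<in>E. b\<in>g}" using e B1 B2 BxE ByE by auto
  qed
  have Ec: "{g\<in>E. c\<in>g} = {{a,b,c},C1,C2,Cx,Cy}"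
  proof
    show "{g\<in>E. c\<in>g} \<subseteq> {{a,b,c},C1,C2,Cx,Cy}"
    proof
      fix g assume g: "g \<in> {g\<in>E. c\<in>g}"
      show "g \<in> {{a,b,c},C1,C2,Cx,Cy}"
      proof (cases "g = {a,b,c}")
        case False
        then have gC: "g \<in> Cs" using g unfolding Cs_def by auto
        show ?thesis
        proof (cases "x \<in> g")
          case True
          then have "g = Cx" using share[OF _ CxE(1), of g c x] g Cx(2) CxE(2) xe by auto
          then show ?thesis by simp
        next
          case nx: False
          show ?thesis
          proof (cases "y \<in> g")
            case True
            then have "g = Cy" using share[OF _ CyE(1), of g c y] g Cy(2) CyE(2) xe by auto
            then show ?thesis by simp
          next
            case False
            then have "g \<in> C0" using gC nx unfolding C0_def by auto
            then show ?thesis using C12 by auto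
          qed
        qed
      qed simp
    qed
    show "{{a,b,c},C1,C2,Cx,Cy} \<subseteq> {g\<in>E. c\<in>g}" using e C1 C2 CxE CyE by auto
  qed
  show ?thesis
    apply (rule that[of u1 v1 u2 v2 x1 y1 x2 y2])
    using B1(1) B2(1) v1(1) v2(1) BxE(1) ByE(1) x1(1) y1(1) C1(1) C2(1) C1e C2e CxE(1) CyE(1) x2(1) y2(1)
      apply simp_all
    using wdist x1e y1e x2e y2e x1u y1u x2u y2u x1y y1x x2y y2x x1(3) y1(3) x2(3) y2(3)
      x1y1 x2y2 x1x2 y1y2 Eb Ec B1 B2 v1(1) v2(1) C1e C2e x1(1) y1(1) x2(1) y2(1)
    by simp_all
qed

end

context cf begin

lemma S2:
  assumes e: "{a,b,c} \<in> E" and db: "dg b = 5" and dc: "dg c = 5"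
    and EB: "{b,u1,v1} \<in> E" "{b,u2,v2} \<in> E" "{b,x,x1} \<in> E" "{b,y,y1} \<in> E"
    and EC: "{c,u1,u2} \<in> E" "{c,v1,v2} \<in> E" "{c,x,x2} \<in> E" "{c,y,y2} \<in> E"
    and wd: "distinct [a,b,c,u1,v1,u2,v2,x,y]"
    and od: "x1 \<notin> {a,b,c,u1,v1,u2,v2,x,y}" "y1 \<notin> {a,b,c,u1,v1,u2,v2,x,y}"
    "x2 \<notin> {a,b,c,u1,v1,u2,v2,x,y}" "y2 \<notin> {a,b,c,u1,v1,u2,v2,x,y}"
    "x1 \<noteq> y1" "x2 \<noteq> y2" "x1 \<noteq> x2" "y1 \<noteq> y2"
    and Eb: "{g\<in>E. b\<in>g} = {{a,b,c},{b,u1,v1},{b,u2,v2},{b,x,x1},{b,y,y1}}"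
    and Ec: "{g\<in>E. c\<in>g} = {{a,b,c},{c,u1,u2},{c,v1,v2},{c,x,x2},{c,y,y2}}"
    and A1: "{a,x,y} \<in> E"
    and A2: "{a,z,w} \<in> E" "{a,z,w} \<noteq> {a,b,c}" "{a,z,w} \<noteq> {a,x,y}"
  shows "x1 = y2 \<and> y1 = x2 \<and> ({z,w} \<subseteq> {u1,v1,u2,v2} \<or> {z,w} = {x1,y1})"
proof -
  note zwd = edge_distinct[OF A2(1)]
  have zwe: "z \<notin> {a,b,c}" "w \<notin> {a,b,c}"
    using not_in_other[OF A2(1) e A2(2), of a] zwd by auto
  have zwA: "z \<notin> {a,x,y}" "w \<notin> {a,x,y}"
    using not_in_other[OF A2(1) A1 A2(3), of a] zwd by auto
  have loc: "q \<in> {u1,v1,u2,v2} \<or> (q = x1 \<and> q = y2) \<or> (q = y1 \<and> q = x2)" if q: "q \<in> {z,w}" for q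
  proof -
    obtain q' where qq': "{a,q,q'} = {a,z,w}"
    proof (cases "q = z")
      case True then show ?thesis using that[of w] by simp
    next
      case False then have "q = w" using q by simp
      then show ?thesis using that[of z] by (simp add: insert_commute)
    qed
    have A2q: "{a,q,q'} \<in> E" "{a,q,q'} \<noteq> {a,b,c}" using A2 qq' by auto
    obtain u1' v1' u2' v2' x1' y1' x2' y2' where
      "{b,q,x1'} \<in> E" "{c,q,x2'} \<in> E"
      by (rule S1[OF e db dc A2q]) blast
    then have "{b,q,x1'} \<in> {g\<in>E. b\<in>g}" "{c,q,x2'} \<in> {g\<in>E. c\<in>g}" by auto
    then have "q \<in> {a,b,c,u1,v1,u2,v2,x,x1,y,y1}" "q \<in> {a,b,c,u1,v1,u2,v2,x,x2,y,y2}"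
      unfolding Eb Ec by auto
    moreover have "q \<notin> {a,b,c,x,y}" using q zwe zwA by auto
    ultimately show ?thesis using od by auto
  qed
  have W: "distinct [u1,v1,u2,v2]" "x1 \<notin> {u1,v1,u2,v2}" "y1 \<notin> {u1,v1,u2,v2}"
    "x2 \<notin> {u1,v1,u2,v2}" "y2 \<notin> {u1,v1,u2,v2}" using wd od by auto
  have bA2: "b \<notin> {a,z,w}" "c \<notin> {a,z,w}" using zwe wd by auto
  have ne: "{b,x,x1} \<noteq> {a,b,c}" "{b,y,y1} \<noteq> {a,b,c}" "{c,x,x2} \<noteq> {a,b,c}" "{c,y,y2} \<noteq> {a,b,c}"
    "{c,u1,u2} \<noteq> {a,b,c}" "{c,v1,v2} \<noteq> {a,b,c}"
    using wd od by (auto simp: doubleton_eq_iff insert_eq_iff)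
  have mixed: False if q: "{q,q'} = {z,w}" "q \<notin> {u1,v1,u2,v2}" "q' \<in> {u1,v1,u2,v2}" for q q'
  proof -
    have Aq: "{a,q,q'} \<in> E" "{a,q,q'} \<noteq> {a,b,c}" "b \<notin> {a,q,q'}" "c \<notin> {a,q,q'}"
      using A2 bA2 q(1) by (auto simp: insert_commute)
    have qq: "(q = x1 \<and> q = y2) \<or> (q = y1 \<and> q = x2)" using loc[of q] q by auto
    have qa: "q \<noteq> a" "q' \<noteq> a" using q(1) zwd by auto
    show False
    proof (cases "q = x1")
      case True
      then have qy2: "q = y2" using qq od by auto
      show False
      proof (cases "q' \<in> {u1,u2}")
        case True
        show False
          by (rule crown_core[OF e Aq(1) _ Aq(2) EB(4) _ ne(2) EC(2) _ ne(6)])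
             (use True \<open>q = x1\<close> qy2 W wd od qa in auto)
      next
        case False
        then have "q' \<in> {v1,v2}" using q(3) by auto
        then show False
          by (intro crown_core[OF e Aq(1) _ Aq(2) EB(4) _ ne(2) EC(1) _ ne(5)])
             (use \<open>q = x1\<close> qy2 W wd od qa in auto)
      qed
    next
      case False
      then have qy1: "q = y1" "q = x2" using qq by auto
      show False
      proof (cases "q' \<in> {u1,u2}")
        case True
        show False
          by (rule crown_core[OF e Aq(1) _ Aq(2) EB(3) _ ne(1) EC(2) _ ne(6)])
             (use True qy1 W wd od qa in auto)
      next
        case False
        then have "q' \<in> {v1,v2}" using q(3) by auto
        then show False
          by (intro crown_core[OF e Aq(1) _ Aq(2) EB(3) _ ne(1) EC(1) _ ne(5)])
             (use qy1 W wd od qa in auto)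
      qed
    qed
  qed
  have lz: "z \<in> {u1,v1,u2,v2} \<or> (z = x1 \<and> z = y2) \<or> (z = y1 \<and> z = x2)" using loc by auto
  have lw: "w \<in> {u1,v1,u2,v2} \<or> (w = x1 \<and> w = y2) \<or> (w = y1 \<and> w = x2)" using loc by auto
  show ?thesis
  proof (cases "z \<in> {u1,v1,u2,v2}")
    case zin: True
    show ?thesis
    proof (cases "w \<in> {u1,v1,u2,v2}")
      case win: True
      have Ad: "b \<notin> {a,z,w}" "c \<notin> {a,z,w}" using bA2 by auto
      have "x1 = y2"
      proof (rule ccontr)
        assume H: "x1 \<noteq> y2"
        show False
          by (rule crown_core[OF e A2(1) _ A2(2) EB(3) _ ne(1) EC(4) _ ne(4)])
             (use H zin win W wd od zwd in auto)
      qed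
      moreover have "y1 = x2"
      proof (rule ccontr)
        assume H: "y1 \<noteq> x2"
        show False
          by (rule crown_core[OF e A2(1) _ A2(2) EB(4) _ ne(2) EC(3) _ ne(3)])
             (use H zin win W wd od zwd in auto)
      qed
      ultimately show ?thesis using zin win by auto
    next
      case False
      then show ?thesis using mixed[of w z] zin by (auto simp: insert_commute)
    qed
  next
    case znot: False
    show ?thesis
    proof (cases "w \<in> {u1,v1,u2,v2}")
      case True
      then show ?thesis using mixed[of z w] znot by auto
    next
      case False
      then show ?thesis using lz lw znot zwd od by auto
    qed
  qed
qed

end

context cf begin

lemma LK:
  assumes e: "{a,b,c} \<in> E" and da: "dg a \<ge> 4" and db: "dg b = 5" and dc: "dg c = 5"
    and g: "g \<in> E" "b \<in> g" "g \<noteq> {a,b,c}" "p \<in> g" "p \<noteq> b"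
  shows "dg p \<le> 3"
proof (rule ccontr)
  assume "\<not> dg p \<le> 3"
  then have dp: "dg p \<ge> 4" by simp
  note dist = edge_distinct[OF e]
  obtain A1 where A1: "A1 \<in> E" "a \<in> A1" "A1 \<noteq> {a,b,c}"
    using avoid[of "{}" a "{{a,b,c}}"] da by auto
  obtain x y where Axy: "A1 = {a,x,y}" "x\<noteq>a" "y\<noteq>a" "x\<noteq>y" by (rule edge_obtain[OF A1(1) A1(2)])
  have A1': "{a,x,y} \<in> E" "{a,x,y} \<noteq> {a,b,c}" using A1 Axy by auto
  obtain u1 v1 u2 v2 x1 y1 x2 y2 where
    EB: "{b,u1,v1} \<in> E" "{b,u2,v2} \<in> E" "{b,x,x1} \<in> E" "{b,y,y1} \<in> E"
    and EC: "{c,u1,u2} \<in> E" "{c,v1,v2} \<in> E" "{c,x,x2} \<in> E" "{c,y,y2} \<in> E"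
    and wd: "distinct [a,b,c,u1,v1,u2,v2,x,y]"
    and od: "x1 \<notin> {a,b,c,u1,v1,u2,v2,x,y}" "y1 \<notin> {a,b,c,u1,v1,u2,v2,x,y}"
    "x2 \<notin> {a,b,c,u1,v1,u2,v2,x,y}" "y2 \<notin> {a,b,c,u1,v1,u2,v2,x,y}"
    "x1 \<noteq> y1" "x2 \<noteq> y2" "x1 \<noteq> x2" "y1 \<noteq> y2"
    and Eb: "{g\<in>E. b\<in>g} = {{a,b,c},{b,u1,v1},{b,u2,v2},{b,x,x1},{b,y,y1}}"
    and Ec: "{g\<in>E. c\<in>g} = {{a,b,c},{c,u1,u2},{c,v1,v2},{c,x,x2},{c,y,y2}}"
    by (rule S1[OF e db dc A1'])
  note S2' = S2[OF e db dc EB EC wd od Eb Ec A1'(1)]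
  have "card {{a,b,c},A1} \<le> 2" by (simp add: card_insert_if)
  then obtain A2 where A2: "A2 \<in> E" "a \<in> A2" "A2 \<notin> {{a,b,c},A1}"
    using avoid[of "{}" a "{{a,b,c},A1}"] da by auto
  obtain z w where Azw: "A2 = {a,z,w}" "z\<noteq>a" "w\<noteq>a" "z\<noteq>w" by (rule edge_obtain[OF A2(1) A2(2)])
  have "card {{a,b,c},A1,A2} \<le> 3" by (simp add: card_insert_if)
  then obtain A3 where A3: "A3 \<in> E" "a \<in> A3" "A3 \<notin> {{a,b,c},A1,A2}"
    using avoid[of "{}" a "{{a,b,c},A1,A2}"] da by auto
  obtain z' w' where Azw': "A3 = {a,z',w'}" "z'\<noteq>a" "w'\<noteq>a" "z'\<noteq>w'" by (rule edge_obtain[OF A3(1) A3(2)])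
  have r2: "x1 = y2 \<and> y1 = x2 \<and> ({z,w} \<subseteq> {u1,v1,u2,v2} \<or> {z,w} = {x1,y1})"
    by (rule S2') (use A2 Azw Axy in auto)
  have r3: "x1 = y2 \<and> y1 = x2 \<and> ({z',w'} \<subseteq> {u1,v1,u2,v2} \<or> {z',w'} = {x1,y1})"
    by (rule S2') (use A3 Azw' Axy in auto)
  have pairW: "{a,u1,v2} \<in> E \<or> {a,v1,u2} \<in> E"
    if H: "{a,q,q'} \<in> E" "q \<in> {u1,v1,u2,v2}" "q' \<in> {u1,v1,u2,v2}" "q \<noteq> q'" for q q'
  proof -
    have bad: False if "{q,q'} = {s,t}" "{h,s,t} \<in> E" "h \<noteq> a" "h \<notin> {s,t}" "a \<notin> {s,t}" for h s t
    proof -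
      have "{a,q,q'} = {h,s,t}" using share[OF H(1) that(2), of q q'] that(1) H(4) by auto
      then show False using that(3,5) by auto
    qed
    have "{q,q'} \<noteq> {u1,v1}" using bad[OF _ EB(1)] wd by auto
    moreover have "{q,q'} \<noteq> {u2,v2}" using bad[OF _ EB(2)] wd by auto
    moreover have "{q,q'} \<noteq> {u1,u2}" using bad[OF _ EC(1)] wd by auto
    moreover have "{q,q'} \<noteq> {v1,v2}" using bad[OF _ EC(2)] wd by auto
    ultimately have "{q,q'} = {u1,v2} \<or> {q,q'} = {v1,u2}"
      using H(2,3,4) by (auto simp: doubleton_eq_iff)
    then show ?thesis using H(1) by (auto simp: insert_commute)
  qed
  have diag: "{a,u1,v2} \<in> E \<or> {a,v1,u2} \<in> E"
  proof (cases "{z,w} \<subseteq> {u1,v1,u2,v2}")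
    case True
    then show ?thesis using pairW[of z w] A2 Azw by auto
  next
    case False
    then have zw: "{z,w} = {x1,y1}" using r2 by auto
    show ?thesis
    proof (cases "{z',w'} \<subseteq> {u1,v1,u2,v2}")
      case True
      then show ?thesis using pairW[of z' w'] A3 Azw' by auto
    next
      case False
      then have "{z',w'} = {x1,y1}" using r3 by auto
      then have "A3 = A2" using zw Azw Azw' by simp
      then show ?thesis using A3 by auto
    qed
  qed
  have x1y2: "x2 = y1" "y2 = x1" using r2 by auto
  have EC': "{c,x,y1} \<in> E" "{c,y,x1} \<in> E" using EC x1y2 by auto
  have pW: "p \<in> {u1,v1,u2,v2,x,x1,y,y1}"
  proof -
    have "g \<in> {g\<in>E. b\<in>g}" using g by auto
    then show ?thesis using g unfolding Eb by auto
  qed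
  have "card {a,b,c} \<le> 3" by (simp add: card_insert_if)
  moreover have "p \<notin> {a,b,c}" using pW wd od by auto
  ultimately obtain X where X: "X \<in> E" "p \<in> X" "{a,b,c} \<inter> X = {}"
    using avoid[of "{a,b,c}" p "{}"] dp by auto
  have Xabc: "a \<notin> X" "b \<notin> X" "c \<notin> X" using X(3) by auto
  have alld: "distinct [a,b,c,u1,v1,u2,v2,x,y,x1,y1]" using wd od by auto
  have A1E: "{a,x,y} \<in> E" using A1' by simp
  from pW show False
  proof (elim insertE)
    assume "p = u1" then show False
      by (intro kill[where b=b and p=u1 and q=v1 and c=c and r=u2 and s=v2 and ?d1.0=x and ?d3.0=x1 and ?d2.0=y and ?d4.0=y1 and a=a and X=X])
         (use EB EC EC' diag A1E alld X Xabc in \<open>auto simp: insert_commute\<close>)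
  next
    assume "p = v1" then show False
      by (intro kill[where b=b and p=v1 and q=u1 and c=c and r=v2 and s=u2 and ?d1.0=x and ?d3.0=x1 and ?d2.0=y and ?d4.0=y1 and a=a and X=X])
         (use EB EC EC' diag A1E alld X Xabc in \<open>auto simp: insert_commute\<close>)
  next
    assume "p = u2" then show False
      by (intro kill[where b=b and p=u2 and q=v2 and c=c and r=u1 and s=v1 and ?d1.0=x and ?d3.0=x1 and ?d2.0=y and ?d4.0=y1 and a=a and X=X])
         (use EB EC EC' diag A1E alld X Xabc in \<open>auto simp: insert_commute\<close>)
  next
    assume "p = v2" then show False
      by (intro kill[where b=b and p=v2 and q=u2 and c=c and r=v1 and s=u1 and ?d1.0=x and ?d3.0=x1 and ?d2.0=y and ?d4.0=y1 and a=a and X=X])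
         (use EB EC EC' diag A1E alld X Xabc in \<open>auto simp: insert_commute\<close>)
  next
    assume "p = x" then show False
      by (intro kill[where b=b and p=x and q=x1 and c=c and r=y1 and s=y and ?d1.0=u1 and ?d3.0=v1 and ?d2.0=v2 and ?d4.0=u2 and a=a and X=X])
         (use EB EC EC' diag A1E alld X Xabc in \<open>auto simp: insert_commute\<close>)
  next
    assume "p = x1" then show False
      by (intro kill[where b=b and p=x1 and q=x and c=c and r=y and s=y1 and ?d1.0=u1 and ?d3.0=v1 and ?d2.0=v2 and ?d4.0=u2 and a=a and X=X])
         (use EB EC EC' diag A1E alld X Xabc in \<open>auto simp: insert_commute\<close>)
  next
    assume "p = y" then show False
      by (intro kill[where b=b and p=y and q=y1 and c=c and r=x1 and s=x and ?d1.0=u1 and ?d3.0=v1 and ?d2.0=v2 and ?d4.0=u2 and a=a and X=X])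
         (use EB EC EC' diag A1E alld X Xabc in \<open>auto simp: insert_commute\<close>)
  next
    assume "p = y1"
    then show False
      by (intro kill[where b=b and p=y1 and q=y and c=c and r=x and s=x1 and ?d1.0=u1 and ?d3.0=v1 and ?d2.0=v2 and ?d4.0=u2 and a=a and X=X])
         (use EB EC EC' diag A1E alld X Xabc in \<open>auto simp: insert_commute\<close>)
  next
    assume "p \<in> {}" then show False by simp
  qed
qed

end

context cf begin

definition ct :: "'a \<Rightarrow> real" where "ct v = ctf (dg v)"
definition wt :: "'a set \<Rightarrow> real" where "wt g = (\<Sum>v\<in>g. ct v)"
definition sg :: "'a set \<Rightarrow> real" where "sg g = wt g - 2/3"

lemma dg_pos: "g \<in> E \<Longrightarrow> v \<in> g \<Longrightarrow> dg v \<ge> 1"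
  unfolding dg_def using finEv[of "\<lambda>h. v \<in> h"]
  by (metis (mono_tags, lifting) One_nat_def Suc_leI card_gt_0_iff empty_iff mem_Collect_eq)

lemma wt3: "a \<noteq> b \<Longrightarrow> a \<noteq> c \<Longrightarrow> b \<noteq> c \<Longrightarrow> wt {a,b,c} = ct a + ct b + ct c"
  unfolding wt_def by simp

lemma edge_class:
  assumes g: "g \<in> E"
  shows "sg g \<ge> 1/30 \<or>
    (sg g < 0 \<and> sg g \<ge> -1/15 \<and> (\<exists>a b c. g = {a,b,c} \<and> dg a \<ge> 4 \<and> dg b = 5 \<and> dg c = 5)) \<or>
    (sg g = 0 \<and> (\<exists>a b c. g = {a,b,c} \<and> dg a = 3 \<and> dg b = 3 \<and> dg c \<ge> 6))"
proof -
  obtain u where "u \<in> g" using c3[OF g] by fastforce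
  then obtain v w where g3: "g = {u,v,w}" "v \<noteq> u" "w \<noteq> u" "v \<noteq> w" by (rule edge_obtain[OF g])
  have pos: "dg u \<ge> 1" "dg v \<ge> 1" "dg w \<ge> 1" using dg_pos[OF g] g3 by auto
  have e1: "{u,v,w} \<in> E" "{u,w,v} \<in> E" "{v,u,w} \<in> E" "{v,w,u} \<in> E" "{w,u,v} \<in> E" "{w,v,u} \<in> E"
    using g g3 by (auto simp: insert_commute)
  have n: "\<not>(dg u \<ge> 2 \<and> dg v \<ge> 4 \<and> dg w \<ge> 6)" "\<not>(dg u \<ge> 2 \<and> dg w \<ge> 4 \<and> dg v \<ge> 6)"
    "\<not>(dg v \<ge> 2 \<and> dg u \<ge> 4 \<and> dg w \<ge> 6)" "\<not>(dg v \<ge> 2 \<and> dg w \<ge> 4 \<and> dg u \<ge> 6)"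
    "\<not>(dg w \<ge> 2 \<and> dg u \<ge> 4 \<and> dg v \<ge> 6)" "\<not>(dg w \<ge> 2 \<and> dg v \<ge> 4 \<and> dg u \<ge> 6)"
    using crown1[OF e1(1)] crown1[OF e1(2)] crown1[OF e1(3)] crown1[OF e1(4)]
      crown1[OF e1(5)] crown1[OF e1(6)] by auto
  have sgv: "sg g = ctf (dg u) + ctf (dg v) + ctf (dg w) - 2/3"
    unfolding sg_def g3(1) using g3 by (simp add: wt3 ct_def)
  define S where "S = ctf (dg u) + ctf (dg v) + ctf (dg w)"
  have sgS: "sg g = S - 2/3" using sgv S_def by simp
  have D1: "\<exists>a b c. g = {a,b,c} \<and> dg a \<ge> 4 \<and> dg b = 5 \<and> dg c = 5"
    if "(dg u \<ge> 4 \<and> dg v = 5 \<and> dg w = 5) \<or> (dg v \<ge> 4 \<and> dg u = 5 \<and> dg w = 5) \<or> (dg w \<ge> 4 \<and> dg u = 5 \<and> dg v = 5)"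
    using that
    apply (elim disjE)
    subgoal by (rule exI[of _ u], rule exI[of _ v], rule exI[of _ w]) (simp add: g3)
    subgoal by (rule exI[of _ v], rule exI[of _ u], rule exI[of _ w]) (simp add: g3 insert_commute)
    subgoal by (rule exI[of _ w], rule exI[of _ u], rule exI[of _ v]) (simp add: g3 insert_commute)
    done
  have T1: "\<exists>a b c. g = {a,b,c} \<and> dg a = 3 \<and> dg b = 3 \<and> dg c \<ge> 6"
    if "(dg u = 3 \<and> dg v = 3 \<and> dg w \<ge> 6) \<or> (dg u = 3 \<and> dg w = 3 \<and> dg v \<ge> 6) \<or> (dg v = 3 \<and> dg w = 3 \<and> dg u \<ge> 6)"
    using that
    apply (elim disjE)
    subgoal by (rule exI[of _ u], rule exI[of _ v], rule exI[of _ w]) (simp add: g3)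
    subgoal by (rule exI[of _ u], rule exI[of _ w], rule exI[of _ v]) (simp add: g3 insert_commute)
    subgoal by (rule exI[of _ v], rule exI[of _ w], rule exI[of _ u]) (simp add: g3 insert_commute)
    done
  from classify[OF pos n, folded S_def]
  consider (a) "S \<ge> 2/3 + 1/30"
    | (b) "S < 2/3" "S \<ge> 2/3 - 1/15" "(dg u \<ge> 4 \<and> dg v = 5 \<and> dg w = 5) \<or> (dg v \<ge> 4 \<and> dg u = 5 \<and> dg w = 5) \<or> (dg w \<ge> 4 \<and> dg u = 5 \<and> dg v = 5)"
    | (c) "S = 2/3" "(dg u = 3 \<and> dg v = 3 \<and> dg w \<ge> 6) \<or> (dg u = 3 \<and> dg w = 3 \<and> dg v \<ge> 6) \<or> (dg v = 3 \<and> dg w = 3 \<and> dg u \<ge> 6)"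
    by blast
  then show ?thesis
  proof cases
    case a
    then have "sg g \<ge> 1/30" using sgS by linarith
    then show ?thesis by simp
  next
    case b
    then have "sg g < 0" "sg g \<ge> -1/15" using sgS by linarith+
    then show ?thesis using D1[OF b(3)] by simp
  next
    case c
    then have "sg g = 0" using sgS by linarith
    then show ?thesis using T1[OF c(2)] by simp
  qed
qed

end

context cf begin

definition D where "D = {g\<in>E. sg g < 0}"
definition T where "T = {g\<in>E. 0 \<le> sg g \<and> sg g < 1/30}"
definition Don where "Don t = {g\<in>E. g \<noteq> t \<and> sg g \<ge> 1/15 \<and> (\<exists>v\<in>g\<inter>t. dg v = 3)}"
definition pprop where "pprop g h \<longleftrightarrow> h \<in> E \<and> h \<noteq> g \<and> sg h \<ge> 1/5 \<and>
  (\<exists>b\<in>g\<inter>h. dg b = 5 \<and> card {v\<in>h. dg v = 3} \<le> 2 \<and>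
     (\<forall>h'\<in>E. b\<in>h' \<longrightarrow> h' \<noteq> g \<longrightarrow> (\<forall>p\<in>h'. p \<noteq> b \<longrightarrow> dg p \<le> 3)))"

lemma D_struct: "g \<in> D \<Longrightarrow> sg g \<ge> -1/15 \<and> (\<exists>a b c. g = {a,b,c} \<and> dg a \<ge> 4 \<and> dg b = 5 \<and> dg c = 5)"
  using edge_class[of g] unfolding D_def by auto

lemma D_deg: "g \<in> D \<Longrightarrow> v \<in> g \<Longrightarrow> dg v \<ge> 4"
  using D_struct by fastforce

lemma T_struct: "t \<in> T \<Longrightarrow> \<exists>a b c. t = {a,b,c} \<and> dg a = 3 \<and> dg b = 3 \<and> dg c \<ge> 6"
  using edge_class[of t] unfolding T_def by auto

lemma ctf_le3: "1 \<le> n \<Longrightarrow> n \<le> 3 \<Longrightarrow> ctf n \<ge> 1/3"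
  unfolding ctf_def by (auto simp: field_simps)

lemma ctf_le5: "1 \<le> n \<Longrightarrow> n \<le> 5 \<Longrightarrow> ctf n \<ge> 1/5"
  unfolding ctf_def by (auto simp: field_simps)

lemma partner_ex: assumes "g \<in> D" shows "\<exists>h. pprop g h"
proof -
  obtain a b c where abc: "g = {a,b,c}" "dg a \<ge> 4" "dg b = 5" "dg c = 5" using D_struct[OF assms] by blast
  have gE: "g \<in> E" using assms unfolding D_def by auto
  have e: "{a,b,c} \<in> E" using gE abc by simp
  obtain h where h: "h \<in> E" "b \<in> h" "h \<notin> {g}" using avoid[of "{}" b "{g}"] abc by auto
  obtain p q where hpq: "h = {b,p,q}" "p \<noteq> b" "q \<noteq> b" "p \<noteq> q" by (rule edge_obtain[OF h(1,2)])
  have LKb: "\<forall>h'\<in>E. b\<in>h' \<longrightarrow> h' \<noteq> g \<longrightarrow> (\<forall>p\<in>h'. p \<noteq> b \<longrightarrow> dg p \<le> 3)"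
    using LK[OF e abc(2,3,4)] abc(1) by blast
  have dpq: "dg p \<le> 3" "dg q \<le> 3" using LKb h hpq by auto
  have pq1: "dg p \<ge> 1" "dg q \<ge> 1" using dg_pos[OF h(1)] hpq by auto
  have "wt h = ct b + ct p + ct q" using hpq by (simp add: wt3)
  moreover have "ct b = 1/5" using abc by (simp add: ct_def ctf_def)
  moreover have "ct p \<ge> 1/3" "ct q \<ge> 1/3" using ctf_le3 dpq pq1 by (auto simp: ct_def)
  ultimately have "sg h \<ge> 1/5" unfolding sg_def by linarith
  moreover have "card {v\<in>h. dg v = 3} \<le> 2"
  proof -
    have "{v\<in>h. dg v = 3} \<subseteq> {p,q}" using hpq abc by auto
    then have "card {v\<in>h. dg v = 3} \<le> card {p,q}" by (intro card_mono) auto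
    then show ?thesis using hpq(4) by simp
  qed
  ultimately have "pprop g h" unfolding pprop_def using h LKb abc by auto
  then show ?thesis by blast
qed

definition P where "P g = (SOME h. pprop g h)"

lemma P_prop: "g \<in> D \<Longrightarrow> pprop g (P g)"
  unfolding P_def using partner_ex by (metis someI_ex)

lemma P_inj: "inj_on P D"
proof (rule inj_onI)
  fix g1 g2 assume g1: "g1 \<in> D" and g2: "g2 \<in> D" and eq: "P g1 = P g2"
  obtain b1 where b1: "b1 \<in> g1" "b1 \<in> P g1" "dg b1 = 5"
    and L1: "\<forall>h'\<in>E. b1\<in>h' \<longrightarrow> h' \<noteq> g1 \<longrightarrow> (\<forall>p\<in>h'. p \<noteq> b1 \<longrightarrow> dg p \<le> 3)"
    using P_prop[OF g1] unfolding pprop_def by auto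
  obtain b2 where b2: "b2 \<in> g2" "b2 \<in> P g2" "dg b2 = 5"
    using P_prop[OF g2] unfolding pprop_def by auto
  have PE: "P g1 \<in> E" "P g1 \<noteq> g1" using P_prop[OF g1] unfolding pprop_def by auto
  have "b1 = b2"
  proof (rule ccontr)
    assume "b1 \<noteq> b2"
    then have "dg b2 \<le> 3" using L1 PE b1(2) b2(2) eq by auto
    then show False using b2 by simp
  qed
  show "g1 = g2"
  proof (rule ccontr)
    assume ne: "g1 \<noteq> g2"
    have g2E: "g2 \<in> E" using g2 unfolding D_def by auto
    obtain p where p: "p \<in> g2" "p \<noteq> b1"
    proof -
      have "card g2 = 3" using c3 g2E by simp
      have "\<not> g2 \<subseteq> {b1}"
      proof
        assume "g2 \<subseteq> {b1}"
        then have "card g2 \<le> 1" using card_mono[of "{b1}" g2] by simp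
        then show False using \<open>card g2 = 3\<close> by simp
      qed
      then show ?thesis using that by blast
    qed
    have "dg p \<le> 3" using L1 g2E b2(1) \<open>b1 = b2\<close> ne p by auto
    moreover have "dg p \<ge> 4" using D_deg[OF g2 p(1)] .
    ultimately show False by simp
  qed
qed

lemma cnt_bound: assumes "g \<in> E" shows "card {t\<in>T. g \<in> Don t} \<le> 2 * card {v\<in>g. dg v = 3}"
proof -
  have fg: "finite g" using finite_edge[OF assms] .
  have "{t\<in>T. g \<in> Don t} \<subseteq> (\<Union>v\<in>{v\<in>g. dg v = 3}. {h\<in>E. v \<in> h} - {g})"
    unfolding Don_def T_def by auto
  then have "card {t\<in>T. g \<in> Don t} \<le> card (\<Union>v\<in>{v\<in>g. dg v = 3}. {h\<in>E. v \<in> h} - {g})"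
    by (intro card_mono) (auto simp: fg finEv)
  also have "\<dots> \<le> (\<Sum>v\<in>{v\<in>g. dg v = 3}. card ({h\<in>E. v \<in> h} - {g}))"
    by (rule card_UN_le) (simp add: fg)
  also have "\<dots> = (\<Sum>v\<in>{v\<in>g. dg v = 3}. 2)"
  proof (rule sum.cong)
    fix v assume v: "v \<in> {v\<in>g. dg v = 3}"
    then have "g \<in> {h\<in>E. v \<in> h}" using assms by auto
    then show "card ({h\<in>E. v \<in> h} - {g}) = 2" using v finEv by (simp add: dg_def)
  qed simp
  finally show ?thesis by simp
qed

end

context cf begin

lemma accounting:
  fixes c0 k :: real
  assumes c0: "0 \<le> c0" "c0 \<le> 1/30" and k: "0 < k"
    and h1: "c0 + 6*c0/k \<le> 1/15" and h2: "2*c0 + 1/15 + 4*c0/k \<le> 1/5"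
    and tk: "c0 = 0 \<or> (\<forall>t\<in>T. real (card (Don t)) \<ge> k)"
  shows "(\<Sum>g\<in>E. sg g) \<ge> c0 * card E"
proof -
  define cnt where "cnt g = real (card {t\<in>T. g \<in> Don t})" for g
  define L where "L g = sg g + (if g \<in> D then 1/15 + c0 else 0) + (if g \<in> T then c0 else 0)" for g
  define R where "R g = c0 + (if g \<in> P ` D then 1/15 + c0 else 0) + c0/k * cnt g" for g
  have ck: "c0/k \<ge> 0" using c0 k by simp
  have LR: "R g \<le> L g" if gE: "g \<in> E" for g
  proof -
    have "card {v\<in>g. dg v = 3} \<le> card g" using finite_edge[OF gE] by (intro card_mono) auto
    then have c3g: "card {v\<in>g. dg v = 3} \<le> 3" using c3[OF gE] by simp
    have cntle: "cnt g \<le> 2 * card {v\<in>g. dg v = 3}" unfolding cnt_def using cnt_bound[OF gE] by simp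
    have cnt6: "cnt g \<le> 6" using cntle c3g by linarith
    have cnt0: "cnt g = 0" if "sg g < 1/15"
    proof -
      have e0: "{t\<in>T. g \<in> Don t} = {}" using that unfolding Don_def by auto
      show ?thesis unfolding cnt_def e0 by simp
    qed
    have PD: "sg g \<ge> 1/5 \<and> card {v\<in>g. dg v = 3} \<le> 2" if "g \<in> P ` D"
      using that P_prop unfolding pprop_def by auto
    show ?thesis
    proof (cases "g \<in> D")
      case True
      then have s: "sg g < 0" "sg g \<ge> -1/15" using D_struct unfolding D_def by auto
      then have "g \<notin> P ` D" using PD by force
      moreover have "g \<notin> T" using s unfolding T_def by auto
      moreover have "cnt g = 0" using cnt0 s by simp
      ultimately show ?thesis unfolding L_def R_def using True s by simp
    next
      case nD: False
      show ?thesis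
      proof (cases "g \<in> T")
        case True
        then have s: "sg g \<ge> 0" "sg g < 1/30" unfolding T_def by auto
        then have "g \<notin> P ` D" using PD by force
        moreover have "cnt g = 0" using cnt0 s by simp
        ultimately show ?thesis unfolding L_def R_def using True nD s by simp
      next
        case nT: False
        have s: "sg g \<ge> 1/30" using nD nT gE unfolding D_def T_def by auto
        show ?thesis
        proof (cases "g \<in> P ` D")
          case True
          then have p: "sg g \<ge> 1/5" "card {v\<in>g. dg v = 3} \<le> 2" using PD by auto
          have "cnt g \<le> 4" using cntle p(2) by linarith
          then have m4: "c0/k * cnt g \<le> c0/k * 4" using ck by (intro mult_left_mono) auto
          have e4: "c0/k * 4 = 4*c0/k" by simp
          have "R g = c0 + (1/15 + c0) + c0/k * cnt g" unfolding R_def using True by simp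
          then have "R g \<le> 2*c0 + 1/15 + 4*c0/k" using m4 e4 by linarith
          also have "\<dots> \<le> sg g" using h2 p by linarith
          finally show ?thesis unfolding L_def using nD nT by simp
        next
          case nP: False
          show ?thesis
          proof (cases "sg g \<ge> 1/15")
            case True
            have "c0/k * cnt g \<le> c0/k * 6" using ck cnt6 by (intro mult_left_mono) auto
            also have "\<dots> = 6*c0/k" by simp
            finally have m6: "c0/k * cnt g \<le> 6*c0/k" .
            have "R g = c0 + c0/k * cnt g" unfolding R_def using nP by simp
            then have "R g \<le> c0 + 6*c0/k" using m6 by linarith
            also have "\<dots> \<le> sg g" using h1 True by linarith
            finally show ?thesis unfolding L_def using nD nT by simp
          next
            case False
            then have "cnt g = 0" using cnt0 by simp
            then have "R g = c0" unfolding R_def using nP by simp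
            then show ?thesis unfolding L_def using nD nT s c0 by simp
          qed
        qed
      qed
    qed
  qed
  have DE: "D \<subseteq> E" "T \<subseteq> E" unfolding D_def T_def by auto
  have PDE: "P ` D \<subseteq> E" using P_prop unfolding pprop_def by auto
  have finD: "finite D" "finite T" using DE finE finite_subset by auto
  have ind: "(\<Sum>g\<in>E. if g \<in> S then a else 0) = a * card S" if "S \<subseteq> E" for S and a :: real
  proof -
    have "(\<Sum>g\<in>E. if g \<in> S then a else 0) = (\<Sum>g\<in>E \<inter> S. a)"
      by (rule sum.inter_restrict[symmetric]) (rule finE)
    also have "E \<inter> S = S" using that by auto
    finally show ?thesis by simp
  qed
  have sumL: "(\<Sum>g\<in>E. L g) = (\<Sum>g\<in>E. sg g) + (1/15 + c0) * card D + c0 * card T"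
    unfolding L_def sum.distrib ind[OF DE(1)] ind[OF DE(2)] by simp
  have cPD: "card (P ` D) = card D" using card_image[OF P_inj] .
  have sumcnt: "(\<Sum>g\<in>E. cnt g) = (\<Sum>t\<in>T. real (card (Don t)))"
  proof -
    have "(\<Sum>g\<in>E. cnt g) = (\<Sum>g\<in>E. \<Sum>t\<in>{t\<in>T. g \<in> Don t}. (1::real))" unfolding cnt_def by simp
    also have "\<dots> = (\<Sum>t\<in>T. \<Sum>g\<in>{g\<in>E. g \<in> Don t}. (1::real))"
      by (rule sum.swap_restrict[OF finE finD(2)])
    also have "\<dots> = (\<Sum>t\<in>T. real (card (Don t)))"
    proof (rule sum.cong)
      fix t assume "t \<in> T"
      have "{g\<in>E. g \<in> Don t} = Don t" unfolding Don_def by auto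
      then show "(\<Sum>g\<in>{g\<in>E. g \<in> Don t}. (1::real)) = real (card (Don t))" by simp
    qed simp
    finally show ?thesis .
  qed
  have sumR: "(\<Sum>g\<in>E. R g) = c0 * card E + (1/15 + c0) * card D + c0/k * (\<Sum>t\<in>T. real (card (Don t)))"
    unfolding R_def sum.distrib ind[OF PDE] cPD sum_distrib_left[symmetric] sumcnt by simp
  have low: "c0/k * (\<Sum>t\<in>T. real (card (Don t))) \<ge> c0 * card T"
  proof (cases "c0 = 0")
    case True then show ?thesis by simp
  next
    case False
    then have "\<forall>t\<in>T. real (card (Don t)) \<ge> k" using tk by simp
    then have "(\<Sum>t\<in>T. real (card (Don t))) \<ge> (\<Sum>t\<in>T. k)" by (intro sum_mono) auto
    then have "(\<Sum>t\<in>T. real (card (Don t))) \<ge> k * card T" by (simp add: mult.commute)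
    then have "c0/k * (\<Sum>t\<in>T. real (card (Don t))) \<ge> c0/k * (k * card T)"
      using ck by (intro mult_left_mono) auto
    then show ?thesis using k by simp
  qed
  have "(\<Sum>g\<in>E. R g) \<le> (\<Sum>g\<in>E. L g)" by (intro sum_mono LR)
  then show ?thesis using sumL sumR low by linarith
qed

end

context cf begin

definition Bg where "Bg = {v\<in>V. dg v \<ge> 6}"

lemma dcount: "(\<Sum>g\<in>E. wt g) \<le> real (card V) - real (card Bg)"
proof -
  have "(\<Sum>g\<in>E. wt g) = (\<Sum>g\<in>E. \<Sum>v\<in>{v\<in>V. v \<in> g}. ct v)"
  proof (rule sum.cong)
    fix g assume "g \<in> E"
    then have "{v\<in>V. v \<in> g} = g" using subV by auto
    then show "wt g = (\<Sum>v\<in>{v\<in>V. v \<in> g}. ct v)" unfolding wt_def by simp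
  qed simp
  also have "\<dots> = (\<Sum>v\<in>V. \<Sum>g\<in>{g\<in>E. v \<in> g}. ct v)"
    by (rule sum.swap_restrict[OF finE finV])
  also have "\<dots> = (\<Sum>v\<in>V. real (dg v) * ctf (dg v))"
    by (rule sum.cong) (auto simp: dg_def ct_def)
  also have "\<dots> \<le> (\<Sum>v\<in>V. if v \<in> Bg then 0 else 1)"
  proof (rule sum_mono)
    fix v assume "v \<in> V"
    show "real (dg v) * ctf (dg v) \<le> (if v \<in> Bg then 0 else 1)"
      using \<open>v \<in> V\<close> by (cases "dg v = 0") (auto simp: ctf_def Bg_def)
  qed
  also have "\<dots> = real (card (V - Bg))"
  proof -
    have "(\<Sum>v\<in>V. if v \<in> Bg then 0 else (1::real)) = (\<Sum>v\<in>V. if v \<in> V - Bg then 1 else 0)"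
      by (rule sum.cong) auto
    also have "\<dots> = (\<Sum>v\<in>V \<inter> (V - Bg). (1::real))" by (rule sum.inter_restrict[symmetric, OF finV])
    also have "V \<inter> (V - Bg) = V - Bg" by auto
    finally show ?thesis by simp
  qed
  also have "\<dots> = real (card V) - real (card Bg)"
  proof -
    have "Bg \<subseteq> V" unfolding Bg_def by auto
    then have "card (V - Bg) = card V - card Bg" using finV by (simp add: card_Diff_subset finite_subset)
    moreover have "card Bg \<le> card V" using \<open>Bg \<subseteq> V\<close> finV by (simp add: card_mono)
    ultimately show ?thesis by simp
  qed
  finally show ?thesis .
qed

lemma don_sub:
  assumes t: "t = {a,b,c}" "t \<in> E" "dg a = 3" "dg b = 3" "dg c \<ge> 6"
    and M: "Bg \<subseteq> insert c M"
  shows "{h\<in>({h\<in>E. a\<in>h} \<union> {h\<in>E. b\<in>h}) - {t}. M \<inter> h = {}} \<subseteq> Don t"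
proof
  fix h assume h: "h \<in> {h\<in>({h\<in>E. a\<in>h} \<union> {h\<in>E. b\<in>h}) - {t}. M \<inter> h = {}}"
  then have hE: "h \<in> E" "h \<noteq> t" "M \<inter> h = {}" by auto
  obtain v where v: "v \<in> h" "v \<in> t" "dg v = 3" using h t by auto
  obtain p q where hpq: "h = {v,p,q}" "p \<noteq> v" "q \<noteq> v" "p \<noteq> q" by (rule edge_obtain[OF hE(1) v(1)])
  have vc: "v \<noteq> c" using v t by auto
  have cnh: "c \<notin> h" using not_in_other[OF t(2) hE(1) hE(2)[symmetric] v(2) v(1), of c] t vc by auto
  have pV: "p \<in> V" "q \<in> V" using subV[OF hE(1)] hpq by auto
  have "p \<notin> Bg" "q \<notin> Bg" using M hE(3) cnh hpq by auto
  then have d5: "dg p \<le> 5" "dg q \<le> 5" using pV unfolding Bg_def by auto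
  have d1: "dg p \<ge> 1" "dg q \<ge> 1" using dg_pos[OF hE(1)] hpq by auto
  have "wt h = ct v + ct p + ct q" using hpq by (simp add: wt3)
  moreover have "ct v = 1/3" using v by (simp add: ct_def ctf_def)
  moreover have "ct p \<ge> 1/5" "ct q \<ge> 1/5" using ctf_le5 d5 d1 by (auto simp: ct_def)
  ultimately have "sg h \<ge> 1/15" unfolding sg_def by linarith
  then show "h \<in> Don t" unfolding Don_def using hE v by auto
qed

lemma don_card:
  assumes tT: "t \<in> T" and s: "card Bg \<le> 2"
  shows "real (card (Don t)) \<ge> 4 - 2 * (real (card Bg) - 1)"
proof -
  obtain a b c where t: "t = {a,b,c}" "dg a = 3" "dg b = 3" "dg c \<ge> 6" using T_struct[OF tT] by blast
  have tE: "t \<in> E" using tT unfolding T_def by auto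
  have dist: "a \<noteq> b" "a \<noteq> c" "b \<noteq> c" using edge_distinct tE t(1) by auto
  have cBg: "c \<in> Bg" using subV[OF tE] t unfolding Bg_def by auto
  have finBg: "finite Bg" unfolding Bg_def using finV by simp
  define M where "M = Bg - {c}"
  have M: "Bg \<subseteq> insert c M" unfolding M_def by auto
  have cM: "card M = card Bg - 1" unfolding M_def using cBg finBg by simp
  have finM: "finite M" using finBg unfolding M_def by simp
  have Mab: "a \<notin> M" "b \<notin> M" using t unfolding M_def Bg_def by auto
  define S where "S = ({h\<in>E. a\<in>h} \<union> {h\<in>E. b\<in>h}) - {t}"
  have finS: "finite S" unfolding S_def using finEv by auto
  have inter: "{h\<in>E. a\<in>h} \<inter> {h\<in>E. b\<in>h} = {t}"
  proof
    show "{h\<in>E. a\<in>h} \<inter> {h\<in>E. b\<in>h} \<subseteq> {t}"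
    proof
      fix h assume "h \<in> {h\<in>E. a\<in>h} \<inter> {h\<in>E. b\<in>h}"
      then have "h \<in> E" "a \<in> h" "b \<in> h" by auto
      moreover have "a \<in> t" "b \<in> t" using t(1) by auto
      ultimately have "h = t" using share[OF _ tE _ _ _ _ dist(1)] by blast
      then show "h \<in> {t}" by simp
    qed
    show "{t} \<subseteq> {h\<in>E. a\<in>h} \<inter> {h\<in>E. b\<in>h}" using tE t(1) by auto
  qed
  have cU: "card ({h\<in>E. a\<in>h} \<union> {h\<in>E. b\<in>h}) = 5"
  proof -
    have "card ({h\<in>E. a\<in>h} \<union> {h\<in>E. b\<in>h}) + card ({h\<in>E. a\<in>h} \<inter> {h\<in>E. b\<in>h})
      = card {h\<in>E. a\<in>h} + card {h\<in>E. b\<in>h}"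
      using card_Un_Int[of "{h\<in>E. a\<in>h}" "{h\<in>E. b\<in>h}"] finEv by simp
    then show ?thesis using inter t unfolding dg_def by simp
  qed
  have cS: "card S = 4" unfolding S_def using cU tE t by (simp add: card_Diff_singleton_if finEv)
  have sub: "{h\<in>S. M \<inter> h = {}} \<subseteq> Don t" using don_sub[OF t(1) tE t(2,3,4) M] unfolding S_def .
  have finDon: "finite (Don t)" unfolding Don_def using finEv by simp
  have "S \<subseteq> {h\<in>S. M \<inter> h = {}} \<union> (\<Union>m\<in>M. {h\<in>E. a\<in>h \<and> m\<in>h} \<union> {h\<in>E. b\<in>h \<and> m\<in>h})"
    unfolding S_def by auto
  then have "card S \<le> card ({h\<in>S. M \<inter> h = {}} \<union> (\<Union>m\<in>M. {h\<in>E. a\<in>h \<and> m\<in>h} \<union> {h\<in>E. b\<in>h \<and> m\<in>h}))"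
    by (intro card_mono) (auto simp: finS finM finEv)
  also have "\<dots> \<le> card {h\<in>S. M \<inter> h = {}} + card (\<Union>m\<in>M. {h\<in>E. a\<in>h \<and> m\<in>h} \<union> {h\<in>E. b\<in>h \<and> m\<in>h})"
    by (rule card_Un_le)
  also have "card (\<Union>m\<in>M. {h\<in>E. a\<in>h \<and> m\<in>h} \<union> {h\<in>E. b\<in>h \<and> m\<in>h})
      \<le> (\<Sum>m\<in>M. card ({h\<in>E. a\<in>h \<and> m\<in>h} \<union> {h\<in>E. b\<in>h \<and> m\<in>h}))"
    by (rule card_UN_le[OF finM])
  also have "\<dots> \<le> (\<Sum>m\<in>M. 2)"
  proof (rule sum_mono)
    fix m assume m: "m \<in> M"
    have "card ({h\<in>E. a\<in>h \<and> m\<in>h} \<union> {h\<in>E. b\<in>h \<and> m\<in>h})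
       \<le> card {h\<in>E. a\<in>h \<and> m\<in>h} + card {h\<in>E. b\<in>h \<and> m\<in>h}" by (rule card_Un_le)
    also have "\<dots> \<le> 2" using one_through[of a m] one_through[of b m] m Mab by fastforce
    finally show "card ({h\<in>E. a\<in>h \<and> m\<in>h} \<union> {h\<in>E. b\<in>h \<and> m\<in>h}) \<le> 2" .
  qed
  finally have "4 \<le> card {h\<in>S. M \<inter> h = {}} + 2 * card M" using cS by simp
  moreover have "card {h\<in>S. M \<inter> h = {}} \<le> card (Don t)" using card_mono[OF finDon sub] .
  ultimately have "4 \<le> card (Don t) + 2 * card M" by linarith
  moreover have "card Bg \<ge> 1" using cBg finBg by (metis One_nat_def Suc_leI card_gt_0_iff empty_iff)
  ultimately have "real (card (Don t)) + 2 * real (card M) \<ge> 4" by (metis of_nat_add of_nat_le_iff of_nat_mult of_nat_numeral)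
  moreover have "real (card M) = real (card Bg) - 1" using cM \<open>card Bg \<ge> 1\<close> by simp
  ultimately show ?thesis by (simp add: algebra_simps)
qed

end

context cf begin

lemma main_bound:
  assumes n: "card V \<ge> 63"
  shows "2 * real (card E) \<le> 3 * (real (card V) - 3)"
proof -
  have sumsg: "(\<Sum>g\<in>E. sg g) = (\<Sum>g\<in>E. wt g) - 2/3 * real (card E)"
    unfolding sg_def by (simp add: sum_subtractf)
  have up: "(\<Sum>g\<in>E. sg g) \<le> real (card V) - real (card Bg) - 2/3 * real (card E)"
    using sumsg dcount by linarith
  have nr: "real (card V) \<ge> 63" using n by simp
  have finBg: "finite Bg" unfolding Bg_def using finV by simp
  consider (s3) "card Bg \<ge> 3" | (s2) "card Bg = 2" | (s1) "card Bg = 1" | (s0) "card Bg = 0" by linarith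
  then show ?thesis
  proof cases
    case s3
    have "(\<Sum>g\<in>E. sg g) \<ge> (0::real) * real (card E)" by (rule accounting[of 0 1]) auto
    then have "(\<Sum>g\<in>E. sg g) \<ge> 0" by simp
    moreover have "real (card Bg) \<ge> 3" using s3 by simp
    ultimately show ?thesis using up by argo
  next
    case s2
    have tk: "\<forall>t\<in>T. real (card (Don t)) \<ge> 2" using don_card s2 by fastforce
    have "(\<Sum>g\<in>E. sg g) \<ge> (1/90::real) * real (card E)" by (rule accounting[of "1/90" 2]) (use tk in auto)
    moreover have "real (card Bg) = 2" using s2 by simp
    ultimately show ?thesis using up nr by argo
  next
    case s1
    have tk: "\<forall>t\<in>T. real (card (Don t)) \<ge> 4" using don_card s1 by fastforce
    have "(\<Sum>g\<in>E. sg g) \<ge> (1/45::real) * real (card E)" by (rule accounting[of "1/45" 4]) (use tk in auto)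
    moreover have "real (card Bg) = 1" using s1 by simp
    ultimately show ?thesis using up nr by argo
  next
    case s0
    have "Bg = {}" using s0 finBg by simp
    have T0: "T = {}"
    proof (rule ccontr)
      assume "T \<noteq> {}"
      then obtain t where t: "t \<in> T" by blast
      obtain a b c where abc: "t = {a,b,c}" "dg c \<ge> 6" using T_struct[OF t] by blast
      have "t \<in> E" using t unfolding T_def by auto
      then have "c \<in> V" using subV abc by auto
      then have "c \<in> Bg" using abc unfolding Bg_def by auto
      then show False using \<open>Bg = {}\<close> by simp
    qed
    have "(\<Sum>g\<in>E. sg g) \<ge> (1/30::real) * real (card E)" by (rule accounting[of "1/30" 6]) (use T0 in auto)
    moreover have "real (card Bg) = 0" using s0 by simp
    ultimately show ?thesis using up nr by argo
  qed
qed

end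

theorem corollary1p3:
  fixes n :: nat
  assumes "n \<ge> 63"
  shows "real (ex_C13 n) \<le> 3 * (real n - 3) / 2"
proof -
  define S where "S = {card E | E :: nat set set. linear_3graph {..<n} E \<and> \<not> contains_crown E}"
  have ex: "ex_C13 n = Max S" unfolding ex_C13_def S_def by simp
  have bound: "real m \<le> 3 * (real n - 3) / 2" if mS: "m \<in> S" for m
  proof -
    obtain E :: "nat set set" where E: "m = card E" "linear_3graph {..<n} E" "\<not> contains_crown E"
      using mS unfolding S_def by blast
    interpret cf "{..<n}" E
      using E(2,3) unfolding linear_3graph_def by unfold_locales auto
    have "2 * real (card E) \<le> 3 * (real (card {..<n}) - 3)" by (rule main_bound) (use assms in simp)
    then show ?thesis using E(1) by simp
  qed
  have fin: "finite S"
  proof -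
    have "S \<subseteq> card ` Pow (Pow {..<n})"
      unfolding S_def linear_3graph_def by auto
    then show ?thesis by (rule finite_subset) simp
  qed
  have ne: "S \<noteq> {}"
  proof -
    have "linear_3graph {..<n} ({} :: nat set set)" unfolding linear_3graph_def by simp
    moreover have "\<not> contains_crown ({} :: nat set set)" unfolding contains_crown_def by simp
    ultimately have "card ({} :: nat set set) \<in> S" unfolding S_def by blast
    then show ?thesis by blast
  qed
  show ?thesis unfolding ex using bound[OF Max_in[OF fin ne]] .
qed

end
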